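(* Let $A=(\alpha_n)_{n\in\mathbb{N}}$ and $B=(\beta_m)_{m\in\mathbb{N}}$ be sequences of positive real numbers with $\alpha_j\neq\alpha_\ell$ and $\beta_j\neq\beta_\ell$ for all $1\le j<\ell<\infty$, and set $\alpha_0=\beta_0=0$. Consider urn model I with these weights, and let $X_{n,m}$ be the number of white balls remaining when the process stops, started from $n$ white and $m$ black balls. Then for all $n,m\ge 1$ and $0\le k\le n$, \[ \mathbb{P}\{X_{n,m}=k\}=\Big(\prod_{h=1}^{m}\beta_h\Big)\Big(\prod_{h=k+1}^{n}\alpha_h\Big)\sum_{\ell=1}^{m}\frac{1}{\Big(\prod_{j=k}^{n}(\alpha_j+\beta_\ell)\Big)\Big(\prod_{\substack{i=1\\ i\neq\ell}}^{m}(\beta_i-\beta_\ell)\Big)} \] \[ =\Big(\prod_{h=1}^{m}\beta_h\Big)\Big(\prod_{h=k+1}^{n}\alpha_h\Big)\sum_{\ell=k}^{n}\frac{1}{\Big(\prod_{\substack{j=k\\ j\neq\ell}}^{n}(\alpha_j-\alpha_\ell)\Big)\Big(\prod_{i=1}^{m}(\beta_i+\alpha_\ell)\Big)}. \]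
   Context: Urn model I (sampling without replacement with general weights): an urn initially contains $n$ white and $m$ black balls. At each step, if the urn currently contains $n'$ white and $m'$ black balls, a white ball is drawn with probability $\alpha_{n'}/(\alpha_{n'}+\beta_{m'})$ and a black ball with probability $\beta_{m'}/(\alpha_{n'}+\beta_{m'})$; the drawn ball is discarded. The process stops as soon as one colour is exhausted. $X_{n,m}$ denotes the number of white balls in the urn when the process stops (so $X_{n,m}=0$ if the white balls are exhausted first, and otherwise it is the number of white balls left when all black balls have been drawn). Empty products equal $1$. *)

theory Defs
  imports "HOL-Probability.Probability"
begin

text \<open>Urn model I. urn a b n m is the law of X_{n,m}: the number of white balls
left when the process stops, started with n white and m black balls.\<close>

fun urn :: "(nat \<Rightarrow> real) \<Rightarrow> (nat \<Rightarrow> real) \<Rightarrow> nat \<Rightarrow> nat \<Rightarrow> nat pmf" where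
  "urn a b 0 m = return_pmf 0"
| "urn a b (Suc n) 0 = return_pmf (Suc n)"
| "urn a b (Suc n) (Suc m) =
     bind_pmf (bernoulli_pmf (a (Suc n) / (a (Suc n) + b (Suc m))))
       (\<lambda>white. if white then urn a b n (Suc m) else urn a b (Suc n) m)"

end

theory Submission
  imports Defs
begin

definition DD :: "('a \<Rightarrow> real) \<Rightarrow> ('a \<Rightarrow> real) \<Rightarrow> 'a set \<Rightarrow> real" where
  "DD c f C = (\<Sum>p\<in>C. f p / (\<Prod>q\<in>C-{p}. c q - c p))"

lemma prod_nz:
  assumes "finite C" "inj_on c C" "p \<in> C"
  shows "(\<Prod>q\<in>C-{p}. (c q - c p)::real) \<noteq> 0"
proof -
  have fin: "finite (C-{p})" using assms(1) by simp
  have "\<forall>q\<in>C-{p}. c q - c p \<noteq> 0" using assms(2,3) unfolding inj_on_def by auto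
  then show ?thesis by (subst prod_zero_iff[OF fin]) simp
qed

lemma frac_aux:
  fixes u v P f :: real
  assumes "u \<noteq> 0" "v \<noteq> 0" "P \<noteq> 0"
  shows "f / (u * v * P) * (v - u) = f / (u * P) - f / (v * P)"
proof -
  have 1: "f / (u * P) = f * v / (u * v * P)" using assms by simp
  have 2: "f / (v * P) = f * u / (u * v * P)" using assms by simp
  have "f / (u * P) - f / (v * P) = (f * v - f * u) / (u * v * P)"
    unfolding 1 2 by (rule diff_divide_distrib[symmetric])
  also have "\<dots> = f * (v - u) / (u * v * P)" by (simp add: right_diff_distrib)
  also have "\<dots> = f / (u * v * P) * (v - u)" by simp
  finally show ?thesis by simp
qed

lemma alg_aux:
  fixes a b d e X Y s s1 s2 :: real
  assumes "d \<noteq> 0" "X \<noteq> 0" "Y \<noteq> 0" "e = - d" "s * d = s1 - s2"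
  shows "(a / (d * X) + b / (e * Y) + s) * d = (a / X + s1) - (b / Y + s2)"
proof -
  have "(a / (d * X) + b / (e * Y) + s) * d = a / (d * X) * d + b / (e * Y) * d + s * d"
    by (simp add: algebra_simps)
  also have "a / (d * X) * d = a / X" using assms by simp
  also have "b / (e * Y) * d = - (b / Y)" using assms by simp
  finally show ?thesis using assms(5) by linarith
qed

lemma DD_pair:
  assumes S: "finite S" "x\<notin>S" "y\<notin>S" "x\<noteq>y" and inj: "inj_on c (insert x (insert y S))"
  shows "DD c f (insert x (insert y S)) * (c y - c x) = DD c f (insert x S) - DD c f (insert y S)"
proof -
  have cxy: "c x \<noteq> c y" using inj S by (auto simp: inj_on_def)
  have injS: "inj_on c S" using inj by (auto simp: inj_on_def)
  have cxp: "c x \<noteq> c p" "c y \<noteq> c p" if "p \<in> S" for p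
    using inj S that by (auto simp: inj_on_def)
  define P where "P p = (\<Prod>q\<in>S-{p}. c q - c p)" for p
  have Pnz: "P p \<noteq> 0" if "p \<in> S" for p unfolding P_def using prod_nz[OF S(1) injS that] .
  have e1: "insert x (insert y S) - {x} = insert y S" using S by auto
  have e2: "insert x (insert y S) - {y} = insert x S" using S by auto
  have e3: "insert x (insert y S) - {p} = insert x (insert y (S-{p}))" if "p\<in>S" for p
    using S that by auto
  have e4: "insert x S - {x} = S" "insert y S - {y} = S" using S by auto
  have e5: "insert x S - {p} = insert x (S-{p})" "insert y S - {p} = insert y (S-{p})" if "p\<in>S" for p
    using S that by auto
  have L: "DD c f (insert x (insert y S)) = f x / ((c y - c x) * (\<Prod>q\<in>S. c q - c x))
      + f y / ((c x - c y) * (\<Prod>q\<in>S. c q - c y))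
      + (\<Sum>p\<in>S. f p / ((c x - c p) * (c y - c p) * P p))"
  proof -
    have "(\<Sum>p\<in>S. f p / (\<Prod>q\<in>insert x (insert y S) - {p}. c q - c p))
        = (\<Sum>p\<in>S. f p / ((c x - c p) * (c y - c p) * P p))"
      by (rule sum.cong) (use S in \<open>auto simp: e3 P_def mult.assoc\<close>)
    then show ?thesis unfolding DD_def using S
      by (simp add: e1 e2 add.assoc)
  qed
  have Lx: "DD c f (insert x S) = f x / (\<Prod>q\<in>S. c q - c x) + (\<Sum>p\<in>S. f p / ((c x - c p) * P p))"
  proof -
    have "(\<Sum>p\<in>S. f p / (\<Prod>q\<in>insert x S - {p}. c q - c p)) = (\<Sum>p\<in>S. f p / ((c x - c p) * P p))"
      by (rule sum.cong) (use S in \<open>auto simp: e5 P_def\<close>)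
    then show ?thesis unfolding DD_def using S by (simp add: e4)
  qed
  have Ly: "DD c f (insert y S) = f y / (\<Prod>q\<in>S. c q - c y) + (\<Sum>p\<in>S. f p / ((c y - c p) * P p))"
  proof -
    have "(\<Sum>p\<in>S. f p / (\<Prod>q\<in>insert y S - {p}. c q - c p)) = (\<Sum>p\<in>S. f p / ((c y - c p) * P p))"
      by (rule sum.cong) (use S in \<open>auto simp: e5 P_def\<close>)
    then show ?thesis unfolding DD_def using S by (simp add: e4)
  qed
  have sumeq: "(\<Sum>p\<in>S. f p / ((c x - c p) * (c y - c p) * P p)) * (c y - c x)
     = (\<Sum>p\<in>S. f p / ((c x - c p) * P p)) - (\<Sum>p\<in>S. f p / ((c y - c p) * P p))"
    unfolding sum_distrib_right sum_subtractf[symmetric]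
  proof (rule sum.cong)
    fix p assume p: "p \<in> S"
    have a: "c x - c p \<noteq> 0" "c y - c p \<noteq> 0" using cxp[OF p] by auto
    have "c y - c x = (c y - c p) - (c x - c p)" by simp
    then show "f p / ((c x - c p) * (c y - c p) * P p) * (c y - c x) =
          f p / ((c x - c p) * P p) - f p / ((c y - c p) * P p)"
      using frac_aux[OF a Pnz[OF p], of "f p"] by simp
  qed simp
  have cyx: "c y - c x \<noteq> 0" "c x - c y \<noteq> 0" using cxy by auto
  have PX: "(\<Prod>q\<in>S. c q - c x) \<noteq> 0"
    using prod_nz[of "insert x S" c x] S inj by (auto intro: inj_on_subset simp: e4)
  have PY: "(\<Prod>q\<in>S. c q - c y) \<noteq> 0"
    using prod_nz[of "insert y S" c y] S inj by (auto intro: inj_on_subset simp: e4)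
  have E: "c x - c y = - (c y - c x)" by simp
  note A = alg_aux[OF cyx(1) PX PY E sumeq, of "f x" "f y"]
  show ?thesis
    by (simp only: L Lx Ly A)
qed

lemma DD_const_zero_aux:
  assumes "finite S"
  shows "x\<notin>S \<Longrightarrow> y\<notin>S \<Longrightarrow> x\<noteq>y \<Longrightarrow> inj_on c (insert x (insert y S)) \<Longrightarrow>
    DD c (\<lambda>_. 1) (insert x (insert y S)) = 0"
  using assms
proof (induction S arbitrary: x y rule: finite_induct)
  case empty
  have "DD c (\<lambda>_. 1) (insert x (insert y {})) * (c y - c x) = DD c (\<lambda>_. 1) {x} - DD c (\<lambda>_. 1) {y}"
    using DD_pair[of "{}" x y c] empty by auto
  also have "\<dots> = 0" by (simp add: DD_def)
  finally show ?case using empty by (auto simp: inj_on_def)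
next
  case (insert z S)
  have "DD c (\<lambda>_. 1) (insert x (insert y (insert z S))) * (c y - c x)
      = DD c (\<lambda>_. 1) (insert x (insert z S)) - DD c (\<lambda>_. 1) (insert y (insert z S))"
    using DD_pair[of "insert z S" x y c] insert by auto
  also have "DD c (\<lambda>_. 1) (insert x (insert z S)) = 0"
    using insert.IH[of x z] insert.prems insert.hyps by (auto intro: inj_on_subset)
  also have "DD c (\<lambda>_. 1) (insert y (insert z S)) = 0"
    using insert.IH[of y z] insert.prems insert.hyps by (auto intro: inj_on_subset)
  finally show ?case using insert.prems by (auto simp: inj_on_def)
qed

lemma DD_const_zero:
  assumes fin: "finite C" and inj: "inj_on c C" and card: "card C \<ge> 2"
  shows "DD c (\<lambda>_. 1) C = 0"
proof -
  have "C \<noteq> {}" using card by auto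
  then obtain x where x: "x \<in> C" by blast
  have "card (C - {x}) \<ge> 1" using card x fin by (simp add: card_Diff_singleton)
  then have "C - {x} \<noteq> {}" by (intro notI) simp
  then obtain y where y: "y \<in> C" "y \<noteq> x" by blast
  define S where "S = C - {x,y}"
  have C: "C = insert x (insert y S)" using x y unfolding S_def by auto
  have "DD c (\<lambda>_. 1) (insert x (insert y S)) = 0"
  proof (rule DD_const_zero_aux)
    show "finite S" "x \<notin> S" "y \<notin> S" "x \<noteq> y" using fin y unfolding S_def by auto
    show "inj_on c (insert x (insert y S))" using inj unfolding C[symmetric] .
  qed
  then show ?thesis unfolding C .
qed

lemma lin_aux:
  fixes x y w G P :: real
  assumes "w \<noteq> 0" "P \<noteq> 0" "x = y - w"
  shows "x * G / (w * P) = y * (G / (w * P)) - G / P"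
proof -
  have 1: "G / P = w * G / (w * P)" using assms by simp
  have "y * (G / (w * P)) - G / P = (y * G - w * G) / (w * P)"
    unfolding 1 by (simp add: diff_divide_distrib)
  also have "\<dots> = (y - w) * G / (w * P)" by (simp add: left_diff_distrib)
  finally show ?thesis using assms(3) by simp
qed

lemma DD_lin:
  assumes J: "finite J" "n \<notin> J" and inj: "inj_on c (insert n J)"
  shows "DD c (\<lambda>l. (t + c l) * G l) (insert n J) = (t + c n) * DD c G (insert n J) - DD c G J"
proof -
  define P where "P l = (\<Prod>q\<in>J-{l}. c q - c l)" for l
  have injJ: "inj_on c J" using inj by (auto simp: inj_on_def)
  have Pnz: "P l \<noteq> 0" if "l \<in> J" for l unfolding P_def using prod_nz[OF J(1) injJ that] .
  have w: "c n \<noteq> c l" if "l \<in> J" for l using inj J that by (auto simp: inj_on_def)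
  have e1: "insert n J - {n} = J" using J by auto
  have e2: "insert n J - {l} = insert n (J - {l})" if "l \<in> J" for l using J that by auto
  have pr: "(\<Prod>q\<in>insert n J - {l}. c q - c l) = (c n - c l) * P l" if "l \<in> J" for l
    unfolding e2[OF that] P_def using J by simp
  have "DD c (\<lambda>l. (t + c l) * G l) (insert n J) =
      (t + c n) * G n / (\<Prod>q\<in>J. c q - c n) + (\<Sum>l\<in>J. (t + c l) * G l / ((c n - c l) * P l))"
    unfolding DD_def using J by (simp add: e1 pr)
  also have "(\<Sum>l\<in>J. (t + c l) * G l / ((c n - c l) * P l)) =
     (\<Sum>l\<in>J. (t + c n) * (G l / ((c n - c l) * P l)) - G l / P l)"
    by (rule sum.cong[OF refl], rule lin_aux) (auto simp: w Pnz)
  also have "\<dots> = (t + c n) * (\<Sum>l\<in>J. G l / ((c n - c l) * P l)) - DD c G J"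
    by (simp add: sum_subtractf sum_distrib_left DD_def P_def)
  also have "DD c G (insert n J) = G n / (\<Prod>q\<in>J. c q - c n) + (\<Sum>l\<in>J. G l / ((c n - c l) * P l))"
    unfolding DD_def using J by (simp add: e1 pr)
  ultimately show ?thesis by (simp add: algebra_simps)
qed

lemma urn_support: "set_pmf (urn a b n m) \<subseteq> {..n}"
proof (induction n arbitrary: m)
  case 0
  then show ?case by simp
next
  case (Suc n)
  note IHn = Suc.IH
  show ?case
  proof (induction m)
    case 0
    then show ?case by simp
  next
    case (Suc m)
    have "set_pmf (urn a b n (Suc m)) \<subseteq> {..Suc n}" using IHn[of "Suc m"] by auto
    with Suc.IH show ?case by (auto simp: set_bind_pmf split: if_splits)
  qed
qed

lemma urn_zero: "k > n \<Longrightarrow> pmf (urn a b n m) k = 0"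
  using urn_support[of a b n m] by (auto simp: set_pmf_eq)

definition gg :: "(nat \<Rightarrow> real) \<Rightarrow> (nat \<Rightarrow> real) \<Rightarrow> nat \<Rightarrow> nat \<Rightarrow> real" where
  "gg a b m l = 1 / (\<Prod>i=1..m. b i + a l)"

lemma urn_step:
  assumes "0 \<le> p" "p \<le> 1" "p = a (Suc n) / (a (Suc n) + b (Suc m))"
  shows "pmf (urn a b (Suc n) (Suc m)) k = p * pmf (urn a b n (Suc m)) k + (1 - p) * pmf (urn a b (Suc n) m) k"
  using assms by (simp add: pmf_bind)

lemma comb_aux:
  fixes A Bv Bm P D1 D2 p :: real
  assumes "A > 0" "Bv > 0" "p = A / (A + Bv)"
  shows "p * ((Bm * Bv) * P * D1) + (1 - p) * ((Bm * (A * P)) * ((Bv + A) * D2 - D1))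
         = (Bm * Bv) * (A * P) * D2"
proof -
  have ne: "A + Bv \<noteq> 0" using assms by simp
  have 1: "1 - p = Bv / (A + Bv)" using assms ne by (simp add: field_simps)
  have c1a: "(1 - p) * (Bm * (A * P)) = Bv * (Bm * (A * P)) / (A + Bv)" by (simp add: 1)
  have c1b: "p * (Bm * Bv * P) = A * (Bm * Bv * P) / (A + Bv)" by (simp add: assms(3))
  have c1: "p * (Bm * Bv * P) = (1 - p) * (Bm * (A * P))" unfolding c1a c1b by (simp add: ac_simps)
  have c2: "(1 - p) * (Bv + A) = Bv" unfolding 1 using ne by (simp add: add.commute)
  have "p * ((Bm * Bv) * P * D1) + (1 - p) * ((Bm * (A * P)) * ((Bv + A) * D2 - D1))
      = p * (Bm * Bv * P) * D1 + (1 - p) * (Bm * (A * P)) * ((Bv + A) * D2 - D1)"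
    by (simp add: mult.assoc)
  also have "\<dots> = ((1 - p) * (Bv + A)) * (Bm * (A * P)) * D2"
    unfolding c1 by (simp add: algebra_simps)
  also have "\<dots> = (Bm * Bv) * (A * P) * D2" unfolding c2 by (simp add: algebra_simps)
  finally show ?thesis .
qed

lemma main:
  fixes a b :: "nat \<Rightarrow> real"
  assumes apos: "\<forall>j\<ge>1. a j > 0" and bpos: "\<forall>j\<ge>1. b j > 0"
    and ainj: "inj_on a {1..}" and a0: "a 0 = 0"
  shows "k \<le> n \<Longrightarrow> pmf (urn a b n m) k = (\<Prod>h=1..m. b h) * (\<Prod>h=k+1..n. a h) * DD a (gg a b m) {k..n}"
proof -
  have anneg: "a l \<ge> 0" for l
  proof (cases "l = 0")
    case False
    then have "l \<ge> 1" by simp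
    then show ?thesis using apos by (simp add: less_imp_le)
  qed (simp add: a0)
  have injall: "inj_on a S" for S
  proof (rule inj_onI)
    fix x y assume "a x = a y"
    have pos: "a z > 0" if "z \<noteq> 0" for z using apos that by simp
    show "x = y"
    proof (cases "x = 0 \<or> y = 0")
      case True
      then show ?thesis using pos \<open>a x = a y\<close> a0 by (metis less_irrefl)
    next
      case False
      then have "x \<in> {1..}" "y \<in> {1..}" by auto
      then show ?thesis using ainj \<open>a x = a y\<close> by (auto dest: inj_onD)
    qed
  qed
  have Bpos: "(\<Prod>h=1..m. b h) > 0" for m using bpos by (intro prod_pos) auto
  have bpl: "b (Suc m) + a l > 0" for m l using bpos anneg[of l] by (auto intro: add_pos_nonneg)
  have gg_Suc: "gg a b m l = (b (Suc m) + a l) * gg a b (Suc m) l" for m l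
  proof -
    have "(\<Prod>i=1..Suc m. b i + a l) = (b (Suc m) + a l) * (\<Prod>i=1..m. b i + a l)"
      by (simp add: atLeastAtMostSuc_conv)
    then show ?thesis unfolding gg_def using bpl[of m l] by simp
  qed
  show "k \<le> n \<Longrightarrow> ?thesis"
  proof (induction n arbitrary: m k)
    case 0
    then have k: "k = 0" by simp
    have "gg a b m 0 = 1 / (\<Prod>h=1..m. b h)" unfolding gg_def a0 by simp
    moreover have "\<forall>j\<in>{Suc 0..m}. b j \<noteq> 0" using bpos by auto
    ultimately show ?case using k by (simp add: DD_def)
  next
    case (Suc n)
    note IHn = Suc.IH
    show ?case using Suc.prems
    proof (induction m arbitrary: k)
      case 0
      have g0: "gg a b 0 = (\<lambda>_. 1)" unfolding gg_def by auto
      show ?case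
      proof (cases "k = Suc n")
        case True
        then show ?thesis by (simp add: g0 DD_def)
      next
        case False
        then have kn: "k < Suc n" using 0 by simp
        have "DD a (\<lambda>_. 1) {k..Suc n} = 0"
          by (rule DD_const_zero) (use kn injall in auto)
        then show ?thesis using False by (simp add: g0)
      qed
    next
      case (Suc m)
      define A where "A = a (Suc n)"
      define Bv where "Bv = b (Suc m)"
      define p where "p = A / (A + Bv)"
      have A: "A > 0" unfolding A_def using apos by simp
      have Bv: "Bv > 0" unfolding Bv_def using bpos by simp
      have p01: "0 \<le> p" "p \<le> 1" unfolding p_def using A Bv by auto
      have step: "pmf (urn a b (Suc n) (Suc m)) k = p * pmf (urn a b n (Suc m)) k + (1 - p) * pmf (urn a b (Suc n) m) k"
        by (rule urn_step[OF p01]) (simp add: p_def A_def Bv_def)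
      have BS: "(\<Prod>h=1..Suc m. b h) = (\<Prod>h=1..m. b h) * Bv"
        unfolding Bv_def by (simp add: atLeastAtMostSuc_conv)
      show ?case
      proof (cases "k = Suc n")
        case True
        have z: "pmf (urn a b n (Suc m)) k = 0" using True by (intro urn_zero) simp
        have ih: "pmf (urn a b (Suc n) m) k = (\<Prod>h=1..m. b h) * gg a b m (Suc n)"
          using Suc.IH[of k] True by (simp add: DD_def)
        have g: "gg a b m (Suc n) = (Bv + A) * gg a b (Suc m) (Suc n)"
          unfolding Bv_def A_def by (rule gg_Suc)
        have p1: "1 - p = Bv / (A + Bv)" unfolding p_def using A Bv by (simp add: field_simps)
        have "pmf (urn a b (Suc n) (Suc m)) k = Bv / (A + Bv) * ((\<Prod>h=1..m. b h) * ((Bv + A) * gg a b (Suc m) (Suc n)))"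
          unfolding step z ih g p1 by simp
        also have "\<dots> = (\<Prod>h=1..m. b h) * Bv * gg a b (Suc m) (Suc n)"
          using A Bv by (simp add: field_simps)
        finally have X: "pmf (urn a b (Suc n) (Suc m)) k = (\<Prod>h=1..m. b h) * Bv * gg a b (Suc m) (Suc n)" .
        have Y: "(\<Prod>h=1..Suc m. b h) * (\<Prod>h=k+1..Suc n. a h) * DD a (gg a b (Suc m)) {k..Suc n}
           = (\<Prod>h=1..m. b h) * Bv * gg a b (Suc m) (Suc n)"
          using True by (simp add: BS DD_def Bv_def)
        show ?thesis unfolding X Y ..
      next
        case False
        then have kn: "k \<le> n" using Suc.prems by simp
        define P where "P = (\<Prod>h=k+1..n. a h)"
        define D1 where "D1 = DD a (gg a b (Suc m)) {k..n}"
        define D2 where "D2 = DD a (gg a b (Suc m)) {k..Suc n}"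
        have ih1: "pmf (urn a b n (Suc m)) k = ((\<Prod>h=1..m. b h) * Bv) * P * D1"
          using IHn[OF kn, of "Suc m"] unfolding BS P_def D1_def .
        have PS: "(\<Prod>h=k+1..Suc n. a h) = A * P"
          unfolding A_def P_def using kn by (simp add: atLeastAtMostSuc_conv)
        have iv: "{k..Suc n} = insert (Suc n) {k..n}" using kn by (simp add: atLeastAtMostSuc_conv)
        have "DD a (gg a b m) {k..Suc n} = DD a (\<lambda>l. (Bv + a l) * gg a b (Suc m) l) (insert (Suc n) {k..n})"
        proof -
          have "gg a b m = (\<lambda>l. (Bv + a l) * gg a b (Suc m) l)"
            unfolding Bv_def by (rule ext) (rule gg_Suc)
          then show ?thesis unfolding iv by simp
        qed
        also have "\<dots> = (Bv + A) * D2 - D1"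
          unfolding D2_def D1_def iv A_def by (rule DD_lin[OF _ _ injall]) auto
        finally have dd: "DD a (gg a b m) {k..Suc n} = (Bv + A) * D2 - D1" .
        have ih2: "pmf (urn a b (Suc n) m) k = (\<Prod>h=1..m. b h) * (A * P) * ((Bv + A) * D2 - D1)"
          using Suc.IH[of k] Suc.prems unfolding PS dd by simp
        have "pmf (urn a b (Suc n) (Suc m)) k = ((\<Prod>h=1..m. b h) * Bv) * (A * P) * D2"
          unfolding step ih1 ih2 by (rule comb_aux[OF A Bv p_def])
        then show ?thesis unfolding BS PS D2_def .
      qed
    qed
  qed
qed

lemma inv_sign:
  fixes X :: real
  shows "1 / ((-1) ^ k * X) = (-1) ^ k * (1 / X)"
proof -
  have "(-1::real) ^ k = 1 \<or> (-1::real) ^ k = -1"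
    by (cases "even k") (simp_all add: neg_one_even_power neg_one_odd_power)
  then show ?thesis by auto
qed

lemma prod_sumtype:
  assumes "finite A" "finite B"
  shows "(\<Prod>x\<in>Inl`A \<union> Inr`B. g x) = (\<Prod>x\<in>A. g (Inl x)) * (\<Prod>x\<in>B. g (Inr x))"
  using assms by (subst prod.union_disjoint) (auto simp: prod.reindex)

lemma sum_sumtype:
  assumes "finite A" "finite B"
  shows "(\<Sum>x\<in>Inl`A \<union> Inr`B. g x) = (\<Sum>x\<in>A. g (Inl x)) + (\<Sum>x\<in>B. g (Inr x))"
  using assms by (subst sum.union_disjoint) (auto simp: sum.reindex)

lemma pf_identity:
  fixes alpha beta :: "nat \<Rightarrow> real" and n m k :: nat
  assumes alpha_pos: "\<forall>j\<ge>1. alpha j > 0"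
    and beta_pos: "\<forall>j\<ge>1. beta j > 0"
    and alpha_inj: "inj_on alpha {1..}"
    and beta_inj: "inj_on beta {1..}"
    and alpha0: "alpha 0 = 0"
    and m: "m \<ge> 1" and k: "k \<le> n"
  shows "(\<Sum>l=1..m. 1 / ((\<Prod>j=k..n. alpha j + beta l) * (\<Prod>i\<in>{1..m} - {l}. beta i - beta l)))
       = (\<Sum>l=k..n. 1 / ((\<Prod>j\<in>{k..n} - {l}. alpha j - alpha l) * (\<Prod>i=1..m. beta i + alpha l)))"
    (is "?S1 = ?S2")
proof -
  define A where "A = {k..n}"
  define B where "B = {1..m::nat}"
  define C where "C = Inl ` A \<union> Inr ` B"
  define c where "c = case_sum (\<lambda>j. - alpha j) beta"
  define N where "N = card A"
  have fA: "finite A" and fB: "finite B" unfolding A_def B_def by auto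
  have N1: "N \<ge> 1" unfolding N_def A_def using k by simp
  have anneg: "alpha l \<ge> 0" for l
  proof (cases "l = 0")
    case False
    then have "l \<ge> 1" by simp
    then show ?thesis using alpha_pos by (simp add: less_imp_le)
  qed (simp add: alpha0)
  have ainj: "inj_on alpha A"
  proof (rule inj_onI)
    fix x y assume "alpha x = alpha y"
    have pos: "alpha z > 0" if "z \<noteq> 0" for z using alpha_pos that by simp
    show "x = y"
    proof (cases "x = 0 \<or> y = 0")
      case True
      then show ?thesis using pos \<open>alpha x = alpha y\<close> alpha0 by (metis less_irrefl)
    next
      case False
      then have "x \<in> {1..}" "y \<in> {1..}" by auto
      then show ?thesis using alpha_inj \<open>alpha x = alpha y\<close> by (auto dest: inj_onD)
    qed
  qed
  have binj: "inj_on beta B" using beta_inj unfolding B_def by (rule inj_on_subset) auto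
  have bposB: "beta i > 0" if "i \<in> B" for i using beta_pos that unfolding B_def by auto
  have cinj: "inj_on c C"
  proof (rule inj_onI)
    fix x y assume x: "x \<in> C" and y: "y \<in> C" and e: "c x = c y"
    show "x = y"
    proof (cases x)
      case (Inl u)
      show ?thesis
      proof (cases y)
        case (Inl v)
        then show ?thesis using \<open>x = Inl u\<close> x y e ainj unfolding C_def c_def
          by (auto dest: inj_onD)
      next
        case (Inr v)
        then have "v \<in> B" using y unfolding C_def by auto
        then show ?thesis using \<open>x = Inl u\<close> Inr e bposB[of v] anneg[of u] unfolding c_def by auto
      qed
    next
      case (Inr u)
      show ?thesis
      proof (cases y)
        case (Inr v)
        then show ?thesis using \<open>x = Inr u\<close> x y e binj unfolding C_def c_def
          by (auto dest: inj_onD)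
      next
        case (Inl v)
        then have "u \<in> B" using x \<open>x = Inr u\<close> unfolding C_def by auto
        then show ?thesis using \<open>x = Inr u\<close> Inl e bposB[of u] anneg[of v] unfolding c_def by auto
      qed
    qed
  qed
  have cardC: "card C \<ge> 2"
  proof -
    have "card C = card A + card B" unfolding C_def using fA fB
      by (subst card_Un_disjoint) (auto simp: card_image)
    moreover have "card B = m" unfolding B_def by simp
    ultimately show ?thesis using N1 m unfolding N_def by simp
  qed
  have zero: "DD c (\<lambda>_. 1) C = 0"
    by (rule DD_const_zero) (use fA fB cinj cardC in \<open>auto simp: C_def\<close>)
  have dl: "C - {Inl l} = Inl ` (A - {l}) \<union> Inr ` B" for l unfolding C_def by auto
  have dr: "C - {Inr l} = Inl ` A \<union> Inr ` (B - {l})" for l unfolding C_def by auto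
  have cardAl: "card (A - {l}) = N - 1" if "l \<in> A" for l using that fA unfolding N_def by simp
  have tl: "1 / (\<Prod>q\<in>C-{Inl l}. c q - c (Inl l)) =
      (-1) ^ (N - 1) * (1 / ((\<Prod>j\<in>A - {l}. alpha j - alpha l) * (\<Prod>i\<in>B. beta i + alpha l)))"
    if "l \<in> A" for l
  proof -
    have "(\<Prod>q\<in>C-{Inl l}. c q - c (Inl l)) =
        (\<Prod>j\<in>A-{l}. - (alpha j - alpha l)) * (\<Prod>i\<in>B. beta i + alpha l)"
      unfolding dl using fA fB by (simp add: prod_sumtype c_def)
    also have "\<dots> = (-1) ^ (N - 1) * ((\<Prod>j\<in>A - {l}. alpha j - alpha l) * (\<Prod>i\<in>B. beta i + alpha l))"
      unfolding prod_uminus cardAl[OF that] by simp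
    finally show ?thesis by (simp only: inv_sign)
  qed
  have tr: "1 / (\<Prod>q\<in>C-{Inr l}. c q - c (Inr l)) =
      (-1) ^ N * (1 / ((\<Prod>j\<in>A. alpha j + beta l) * (\<Prod>i\<in>B - {l}. beta i - beta l)))"
    for l
  proof -
    have "(\<Prod>q\<in>C-{Inr l}. c q - c (Inr l)) =
        (\<Prod>j\<in>A. - (alpha j + beta l)) * (\<Prod>i\<in>B-{l}. beta i - beta l)"
      unfolding dr using fA fB by (simp add: prod_sumtype c_def add.commute)
    also have "\<dots> = (-1) ^ N * ((\<Prod>j\<in>A. alpha j + beta l) * (\<Prod>i\<in>B - {l}. beta i - beta l))"
      unfolding prod_uminus N_def by simp
    finally show ?thesis by (simp only: inv_sign)
  qed
  have "DD c (\<lambda>_. 1) C = (-1) ^ (N - 1) * ?S2 + (-1) ^ N * ?S1"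
  proof -
    have "DD c (\<lambda>_. 1) C = (\<Sum>l\<in>A. 1 / (\<Prod>q\<in>C-{Inl l}. c q - c (Inl l)))
        + (\<Sum>l\<in>B. 1 / (\<Prod>q\<in>C-{Inr l}. c q - c (Inr l)))"
      unfolding DD_def unfolding C_def using fA fB by (rule sum_sumtype)
    also have "(\<Sum>l\<in>A. 1 / (\<Prod>q\<in>C-{Inl l}. c q - c (Inl l))) = (-1) ^ (N - 1) * ?S2"
      unfolding sum_distrib_left A_def B_def using tl[unfolded A_def B_def] by (intro sum.cong) auto
    also have "(\<Sum>l\<in>B. 1 / (\<Prod>q\<in>C-{Inr l}. c q - c (Inr l))) = (-1) ^ N * ?S1"
      unfolding sum_distrib_left A_def B_def using tr[unfolded A_def B_def] by (intro sum.cong) auto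
    finally show ?thesis .
  qed
  then have "(-1) ^ (N - 1) * ?S2 + (-1) ^ N * ?S1 = 0" using zero by simp
  moreover have "(-1::real) ^ N = - ((-1) ^ (N - 1))"
    using N1 by (metis Suc_diff_1 less_le_trans power_Suc mult_minus1 zero_less_one)
  ultimately have "(-1) ^ (N - 1) * (?S2 - ?S1) = 0" by (simp add: algebra_simps)
  then show ?thesis by simp
qed

theorem theorem1:
  fixes alpha beta :: "nat \<Rightarrow> real" and n m k :: nat
  assumes alpha_pos: "\<forall>j\<ge>1. alpha j > 0"
    and beta_pos: "\<forall>j\<ge>1. beta j > 0"
    and alpha_inj: "inj_on alpha {1..}"
    and beta_inj: "inj_on beta {1..}"
    and alpha0: "alpha 0 = 0"
    and beta0: "beta 0 = 0"
    and n: "n \<ge> 1" and m: "m \<ge> 1" and k: "k \<le> n"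
  shows "pmf (urn alpha beta n m) k =
           (\<Prod>h=1..m. beta h) * (\<Prod>h=k+1..n. alpha h) *
           (\<Sum>l=1..m. 1 / ((\<Prod>j=k..n. alpha j + beta l) *
                              (\<Prod>i\<in>{1..m} - {l}. beta i - beta l)))
       \<and> pmf (urn alpha beta n m) k =
           (\<Prod>h=1..m. beta h) * (\<Prod>h=k+1..n. alpha h) *
           (\<Sum>l=k..n. 1 / ((\<Prod>j\<in>{k..n} - {l}. alpha j - alpha l) *
                              (\<Prod>i=1..m. beta i + alpha l)))"
proof -
  have S2: "DD alpha (gg alpha beta m) {k..n} =
      (\<Sum>l=k..n. 1 / ((\<Prod>j\<in>{k..n} - {l}. alpha j - alpha l) * (\<Prod>i=1..m. beta i + alpha l)))"
    unfolding DD_def gg_def by (intro sum.cong) (simp_all add: mult.commute)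
  have P: "pmf (urn alpha beta n m) k = (\<Prod>h=1..m. beta h) * (\<Prod>h=k+1..n. alpha h) *
           (\<Sum>l=k..n. 1 / ((\<Prod>j\<in>{k..n} - {l}. alpha j - alpha l) * (\<Prod>i=1..m. beta i + alpha l)))"
    using main[OF alpha_pos beta_pos alpha_inj alpha0 k, of m] unfolding S2 .
  show ?thesis
    using P pf_identity[OF alpha_pos beta_pos alpha_inj beta_inj alpha0 m k] by simp
qed

end
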